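(* Let $G$ be a torsion-free group, $\mathbb{F}$ a field, $\alpha$ a zero divisor in $\mathbb{F}[G]$ with $|supp(\alpha)|=4$ and $|S_\alpha|=10$, and $\beta$ a mate of $\alpha$. Let $B=supp(\alpha)$, $C=supp(\beta)$. If $s\in\Delta^i$ and $s'\in\Delta^j$ with $s\ne s'$ and $i,j\in\{3,4\}$, then $|\mathcal{V}(s)\cap\mathcal{V}(s')|\le2$.
   Context: $supp(\gamma)=\{x\in G:\gamma_x\ne0\}$; $S_\alpha=\{h^{-1}h':h\ne h',\ h,h'\in supp(\alpha)\}$. A mate of $\alpha$ is a non-zero $\beta$ with $\alpha\beta=0$ of minimal support size among all non-zero $\beta'$ with $\alpha\beta'=0$. $BC=\{bc:b\in B,c\in C\}$. For $s\in BC$, $R(s)=\{(b,c)\in B\times C:bc=s\}$, $r(s)=|R(s)|$; $\Delta^i=\{s\in BC:r(s)=i\}$; $\mathcal{V}(s)=\{g\in C:(sg^{-1},g)\in R(s)\}$. *)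

theory Defs
  imports "HOL-Algebra.Group"
begin

text \<open>Elements of the group algebra F[G] are modelled as functions from the
group elements to the field with finite support contained in the carrier.\<close>

definition supp :: "('g \<Rightarrow> 'f::zero) \<Rightarrow> 'g set" where
  "supp \<gamma> = {x. \<gamma> x \<noteq> 0}"

definition grp_ring_elem :: "('g, 'b) monoid_scheme \<Rightarrow> ('g \<Rightarrow> 'f::field) \<Rightarrow> bool" where
  "grp_ring_elem G \<gamma> \<longleftrightarrow> finite (supp \<gamma>) \<and> supp \<gamma> \<subseteq> carrier G"

definition grp_ring_mult :: "('g, 'b) monoid_scheme \<Rightarrow> ('g \<Rightarrow> 'f::field) \<Rightarrow> ('g \<Rightarrow> 'f) \<Rightarrow> 'g \<Rightarrow> 'f" where
  "grp_ring_mult G \<alpha> \<beta> x =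
     (if x \<in> carrier G then (\<Sum>h\<in>supp \<alpha>. \<alpha> h * \<beta> (inv\<^bsub>G\<^esub> h \<otimes>\<^bsub>G\<^esub> x)) else 0)"

definition torsion_free :: "('g, 'b) monoid_scheme \<Rightarrow> bool" where
  "torsion_free G \<longleftrightarrow>
     (\<forall>x\<in>carrier G. x \<noteq> \<one>\<^bsub>G\<^esub> \<longrightarrow> (\<forall>n::nat. n > 0 \<longrightarrow> x [^]\<^bsub>G\<^esub> n \<noteq> \<one>\<^bsub>G\<^esub>))"

definition zero_divisor :: "('g, 'b) monoid_scheme \<Rightarrow> ('g \<Rightarrow> 'f::field) \<Rightarrow> bool" where
  "zero_divisor G \<alpha> \<longleftrightarrow> grp_ring_elem G \<alpha> \<and> \<alpha> \<noteq> (\<lambda>_. 0) \<and>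
     (\<exists>\<beta>. grp_ring_elem G \<beta> \<and> \<beta> \<noteq> (\<lambda>_. 0) \<and>
        (grp_ring_mult G \<alpha> \<beta> = (\<lambda>_. 0) \<or> grp_ring_mult G \<beta> \<alpha> = (\<lambda>_. 0)))"

definition mate :: "('g, 'b) monoid_scheme \<Rightarrow> ('g \<Rightarrow> 'f::field) \<Rightarrow> ('g \<Rightarrow> 'f) \<Rightarrow> bool" where
  "mate G \<alpha> \<beta> \<longleftrightarrow> grp_ring_elem G \<beta> \<and> \<beta> \<noteq> (\<lambda>_. 0) \<and> grp_ring_mult G \<alpha> \<beta> = (\<lambda>_. 0) \<and>
     (\<forall>\<beta>'. grp_ring_elem G \<beta>' \<and> \<beta>' \<noteq> (\<lambda>_. 0) \<and> grp_ring_mult G \<alpha> \<beta>' = (\<lambda>_. 0)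
            \<longrightarrow> card (supp \<beta>) \<le> card (supp \<beta>'))"

definition S_set :: "('g, 'b) monoid_scheme \<Rightarrow> ('g \<Rightarrow> 'f::zero) \<Rightarrow> 'g set" where
  "S_set G \<alpha> = {inv\<^bsub>G\<^esub> h \<otimes>\<^bsub>G\<^esub> h' | h h'. h \<noteq> h' \<and> h \<in> supp \<alpha> \<and> h' \<in> supp \<alpha>}"

definition prodset :: "('g, 'b) monoid_scheme \<Rightarrow> 'g set \<Rightarrow> 'g set \<Rightarrow> 'g set" where
  "prodset G B C = {b \<otimes>\<^bsub>G\<^esub> c | b c. b \<in> B \<and> c \<in> C}"

definition Rrep :: "('g, 'b) monoid_scheme \<Rightarrow> 'g set \<Rightarrow> 'g set \<Rightarrow> 'g \<Rightarrow> ('g \<times> 'g) set" where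
  "Rrep G B C s = {(b, c). b \<in> B \<and> c \<in> C \<and> b \<otimes>\<^bsub>G\<^esub> c = s}"

definition rnum :: "('g, 'b) monoid_scheme \<Rightarrow> 'g set \<Rightarrow> 'g set \<Rightarrow> 'g \<Rightarrow> nat" where
  "rnum G B C s = card (Rrep G B C s)"

definition Delta :: "('g, 'b) monoid_scheme \<Rightarrow> 'g set \<Rightarrow> 'g set \<Rightarrow> nat \<Rightarrow> 'g set" where
  "Delta G B C i = {s \<in> prodset G B C. rnum G B C s = i}"

definition Vset :: "('g, 'b) monoid_scheme \<Rightarrow> 'g set \<Rightarrow> 'g set \<Rightarrow> 'g \<Rightarrow> 'g set" where
  "Vset G B C s = {g \<in> C. (s \<otimes>\<^bsub>G\<^esub> inv\<^bsub>G\<^esub> g, g) \<in> Rrep G B C s}"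

end

theory Submission
  imports Defs
begin

lemma excess:
  assumes "finite P" "Q \<subseteq> f ` P"
  shows "card (f`P) + (\<Sum>x\<in>Q. card {p\<in>P. f p = x} - 1) \<le> card P"
proof -
  let ?c = "\<lambda>y. card {p\<in>P. f p = y}"
  have "card P = (\<Sum>y\<in>f`P. ?c y)"
    using sum.image_gen[OF assms(1), of "\<lambda>_. 1::nat" f] by simp
  also have "\<dots> = (\<Sum>y\<in>f`P. 1 + (?c y - 1))"
  proof (rule sum.cong[OF refl])
    fix y assume "y \<in> f ` P"
    then obtain p where "p \<in> P" "f p = y" by auto
    then have "?c y \<ge> 1" using assms(1)
      by (metis (mono_tags, lifting) One_nat_def Suc_leI card_gt_0_iff empty_iff finite_subset mem_Collect_eq subsetI)
    then show "?c y = 1 + (?c y - 1)" by simp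
  qed
  also have "\<dots> = card (f`P) + (\<Sum>y\<in>f`P. ?c y - 1)"
    by (subst sum.distrib) simp
  finally show ?thesis
    using sum_mono2[OF finite_imageI[OF assms(1)] assms(2), of "\<lambda>y. ?c y - 1"] by simp
qed

lemma three_twos:
  assumes "finite P" "card P = 12" "card (f ` P) = 10"
    and "x \<noteq> y" "y \<noteq> z" "x \<noteq> z"
    and "p1 \<in> P" "p2 \<in> P" "p1 \<noteq> p2" "f p1 = x" "f p2 = x"
    and "q1 \<in> P" "q2 \<in> P" "q1 \<noteq> q2" "f q1 = y" "f q2 = y"
    and "r1 \<in> P" "r2 \<in> P" "r1 \<noteq> r2" "f r1 = z" "f r2 = z"
  shows False
proof -
  have two: "card {p\<in>P. f p = w} \<ge> 2" if "a \<in> P" "b \<in> P" "a \<noteq> b" "f a = w" "f b = w" for a b w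
  proof -
    have "{a,b} \<subseteq> {p\<in>P. f p = w}" using that by auto
    from card_mono[OF _ this] assms(1) that(3) show ?thesis by auto
  qed
  have Q: "{x,y,z} \<subseteq> f ` P" using assms by auto
  have "(\<Sum>w\<in>{x,y,z}. card {p\<in>P. f p = w} - 1) \<ge> (\<Sum>w\<in>{x,y,z}. 1::nat)"
    apply (rule sum_mono)
    using two[OF assms(7-11)] two[OF assms(12-16)] two[OF assms(17-21)] by auto
  then have "(\<Sum>w\<in>{x,y,z}. card {p\<in>P. f p = w} - 1) \<ge> 3" using assms(4-6) by simp
  with excess[OF assms(1) Q] assms(2,3) show False by simp
qed

lemma three_and_two:
  assumes "finite P" "card P = 12" "card (f ` P) = 10"
    and "x \<noteq> y"
    and "p1 \<in> P" "p2 \<in> P" "p3 \<in> P" "p1 \<noteq> p2" "p2 \<noteq> p3" "p1 \<noteq> p3" "f p1 = x" "f p2 = x" "f p3 = x"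
    and "q1 \<in> P" "q2 \<in> P" "q1 \<noteq> q2" "f q1 = y" "f q2 = y"
  shows False
proof -
  have "{p1,p2,p3} \<subseteq> {p\<in>P. f p = x}" using assms by auto
  from card_mono[OF _ this] assms(1) assms(8-10) have cx: "card {p\<in>P. f p = x} \<ge> 3" by auto
  have "{q1,q2} \<subseteq> {p\<in>P. f p = y}" using assms by auto
  from card_mono[OF _ this] assms(1) assms(16) have cy: "card {p\<in>P. f p = y} \<ge> 2" by auto
  have Q: "{x,y} \<subseteq> f ` P" using assms by auto
  have "(\<Sum>w\<in>{x,y}. card {p\<in>P. f p = w} - 1) \<ge> 3" using assms(4) cx cy by simp
  with excess[OF assms(1) Q] assms(2,3) show False by simp
qed


lemma (in group) cancel_diff:
  assumes "a \<in> carrier G" "g \<in> carrier G" "h \<in> carrier G"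
  shows "inv (a \<otimes> inv g) \<otimes> (a \<otimes> inv h) = g \<otimes> inv h"
proof -
  have "inv (a \<otimes> inv g) = g \<otimes> inv a" using assms by (simp add: inv_mult_group)
  moreover have "g \<otimes> inv a \<otimes> (a \<otimes> inv h) = g \<otimes> (inv a \<otimes> a \<otimes> inv h)"
    using assms by (metis m_assoc inv_closed m_closed)
  moreover have "inv a \<otimes> a \<otimes> inv h = inv h" using assms by (simp only: l_inv) simp
  ultimately show ?thesis by simp
qed

lemma (in group) diff_inv:
  assumes "g \<in> carrier G" "h \<in> carrier G"
  shows "inv (g \<otimes> inv h) = h \<otimes> inv g"
  using assms by (simp add: inv_mult_group)

lemma (in group) tf_self_inv:
  assumes "torsion_free G" "x \<in> carrier G" "x \<noteq> \<one>" "x = inv x"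
  shows False
proof -
  have "x [^] (2::nat) = x \<otimes> x"
    using assms(2) by (simp add: numeral_2_eq_2)
  also have "\<dots> = x \<otimes> inv x" using assms(4) by simp
  also have "\<dots> = \<one>" using assms(2) by simp
  finally show False using assms(1-3) unfolding torsion_free_def by auto
qed

lemma (in group) diff_one:
  assumes "g \<in> carrier G" "h \<in> carrier G" "g \<noteq> h"
  shows "g \<otimes> inv h \<noteq> \<one>"
proof
  assume "g \<otimes> inv h = \<one>"
  then have "g \<otimes> inv h \<otimes> h = h" using assms by simp
  then show False using assms by (simp add: m_assoc)
qed

lemma (in group) diff_swap_ne:
  assumes "torsion_free G" "g \<in> carrier G" "h \<in> carrier G" "g \<noteq> h"
  shows "g \<otimes> inv h \<noteq> h \<otimes> inv g"
proof
  assume e: "g \<otimes> inv h = h \<otimes> inv g"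
  have "g \<otimes> inv h \<noteq> \<one>" using diff_one assms(2-4) by blast
  moreover have "g \<otimes> inv h = inv (g \<otimes> inv h)" using e diff_inv assms by simp
  ultimately show False using tf_self_inv[OF assms(1), of "g \<otimes> inv h"] assms by simp
qed

lemma (in group) diff_ne:
  assumes "g \<in> carrier G" "h \<in> carrier G" "k \<in> carrier G" "h \<noteq> k"
  shows "g \<otimes> inv h \<noteq> g \<otimes> inv k"
  using assms by (metis inv_closed inv_inv Units_l_cancel Units_eq)

lemma (in group) diff_ne2:
  assumes "g \<in> carrier G" "h \<in> carrier G" "k \<in> carrier G" "g \<noteq> h"
  shows "g \<otimes> inv k \<noteq> h \<otimes> inv k"
  using assms by simp


lemma (in group) main_aux:
  fixes \<alpha> \<beta> :: "'a \<Rightarrow> 'f::field"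
    and s s' :: 'a and i j :: nat
  assumes "group G" and "torsion_free G"
    and "zero_divisor G \<alpha>"
    and "card (supp \<alpha>) = 4" and "card (S_set G \<alpha>) = 10"
    and "mate G \<alpha> \<beta>"
    and "s \<in> Delta G (supp \<alpha>) (supp \<beta>) i" and "s' \<in> Delta G (supp \<alpha>) (supp \<beta>) j"
    and "s \<noteq> s'" and "i \<in> {3, 4}" and "j \<in> {3, 4}"
  shows "card (Vset G (supp \<alpha>) (supp \<beta>) s \<inter> Vset G (supp \<alpha>) (supp \<beta>) s') \<le> 2"
proof (rule ccontr)
  define B where "B = supp \<alpha>"
  define C where "C = supp \<beta>"
  have Bc: "B \<subseteq> carrier G" and Bf: "finite B"
    using assms(3) unfolding B_def zero_divisor_def grp_ring_elem_def by auto
  have Cc: "C \<subseteq> carrier G" and Cf: "finite C"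
    using assms(6) unfolding C_def mate_def grp_ring_elem_def by auto
  have sc: "s \<in> carrier G" using assms(7) Bc Cc unfolding B_def C_def Delta_def prodset_def by auto
  have sc': "s' \<in> carrier G" using assms(8) Bc Cc unfolding B_def C_def Delta_def prodset_def by auto
  define V where "V = Vset G B C s \<inter> Vset G B C s'"
  assume "\<not> card (Vset G (supp \<alpha>) (supp \<beta>) s \<inter> Vset G (supp \<alpha>) (supp \<beta>) s') \<le> 2"
  then have "Suc (Suc (Suc 0)) \<le> card V" unfolding V_def B_def C_def by simp
  then obtain g1 g2 g3 where gV: "g1 \<in> V" "g2 \<in> V" "g3 \<in> V" and gd: "g1 \<noteq> g2" "g2 \<noteq> g3" "g1 \<noteq> g3"
    unfolding card_le_Suc_iff by auto
  have Vp: "g \<in> C \<and> s \<otimes> inv g \<in> B \<and> s' \<otimes> inv g \<in> B" if "g \<in> V" for g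
    using that unfolding V_def Vset_def Rrep_def by auto
  have gc: "g1 \<in> carrier G" "g2 \<in> carrier G" "g3 \<in> carrier G" using Vp gV Cc by auto
  define b1 where "b1 = s \<otimes> inv g1"
  define b2 where "b2 = s \<otimes> inv g2"
  define b3 where "b3 = s \<otimes> inv g3"
  define c1 where "c1 = s' \<otimes> inv g1"
  define c2 where "c2 = s' \<otimes> inv g2"
  define c3 where "c3 = s' \<otimes> inv g3"
  have inB: "b1 \<in> B" "b2 \<in> B" "b3 \<in> B" "c1 \<in> B" "c2 \<in> B" "c3 \<in> B"
    using Vp gV unfolding b1_def b2_def b3_def c1_def c2_def c3_def by auto
  have bd: "b1 \<noteq> b2" "b2 \<noteq> b3" "b1 \<noteq> b3"
    using gd gc sc unfolding b1_def b2_def b3_def by (metis inv_closed inv_inv Units_l_cancel Units_eq)+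
  have cd: "c1 \<noteq> c2" "c2 \<noteq> c3" "c1 \<noteq> c3"
    using gd gc sc' unfolding c1_def c2_def c3_def by (metis inv_closed inv_inv Units_l_cancel Units_eq)+
  have bc: "b1 \<noteq> c1" "b2 \<noteq> c2" "b3 \<noteq> c3"
    using assms(9) gc sc sc' unfolding b1_def b2_def b3_def c1_def c2_def c3_def by simp_all
  define P where "P = {(h, h'). h \<noteq> h' \<and> h \<in> B \<and> h' \<in> B}"
  define f where "f = (\<lambda>(h, h'). inv h \<otimes> h')"
  have PS: "S_set G \<alpha> = f ` P" unfolding S_set_def P_def f_def B_def by auto
  have Pdef: "P = (B \<times> B) - (\<lambda>x. (x, x)) ` B" unfolding P_def by auto
  have Pf: "finite P" unfolding Pdef using Bf by simp
  have "card P = card (B \<times> B) - card ((\<lambda>x. (x, x)) ` B)"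
    unfolding Pdef by (rule card_Diff_subset) (use Bf in auto)
  also have "\<dots> = 16 - 4" using assms(4) unfolding B_def
    by (simp add: card_cartesian_product card_image inj_on_def)
  finally have Pc: "card P = 12" by simp
  have fS: "card (f ` P) = 10" using assms(5) PS by simp
  define d where "d = (\<lambda>x y. x \<otimes> inv y)"
  have fb: "f (s \<otimes> inv x, s \<otimes> inv y) = d x y" if "x \<in> carrier G" "y \<in> carrier G" for x y
    unfolding f_def d_def using cancel_diff[OF sc that] by simp
  have fc: "f (s' \<otimes> inv x, s' \<otimes> inv y) = d x y" if "x \<in> carrier G" "y \<in> carrier G" for x y
    unfolding f_def d_def using cancel_diff[OF sc' that] by simp
  have inP: "(x, y) \<in> P" if "x \<in> B" "y \<in> B" "x \<noteq> y" for x y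
    using that unfolding P_def by auto
  have fb': "f (b1, b2) = d g1 g2" "f (b2, b1) = d g2 g1" "f (b2, b3) = d g2 g3" "f (b3, b2) = d g3 g2" "f (b3, b1) = d g3 g1" "f (b1, b3) = d g1 g3"
    unfolding b1_def b2_def b3_def using fb gc by auto
  have fc': "f (c1, c2) = d g1 g2" "f (c2, c1) = d g2 g1" "f (c2, c3) = d g2 g3" "f (c3, c2) = d g3 g2" "f (c3, c1) = d g3 g1" "f (c1, c3) = d g1 g3"
    unfolding c1_def c2_def c3_def using fc gc by auto
  have sw: "d g1 g2 \<noteq> d g2 g1" "d g2 g3 \<noteq> d g3 g2"
    unfolding d_def using diff_swap_ne[OF assms(2)] gc gd by auto
  have ne: "d g2 g1 \<noteq> d g2 g3" "d g3 g2 \<noteq> d g3 g1"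
    unfolding d_def using diff_ne gc gd by auto
  show False
  proof (cases "d g1 g2 = d g2 g3")
    case False
    show False
      by (rule three_twos[OF Pf Pc fS False[symmetric] sw(1) ne(1)[symmetric]
          inP[OF inB(2) inB(3) bd(2)] inP[OF inB(5) inB(6) cd(2)] _ fb'(3) fc'(3)
          inP[OF inB(1) inB(2) bd(1)] inP[OF inB(4) inB(5) cd(1)] _ fb'(1) fc'(1)
          inP[OF inB(2) inB(1) bd(1)[symmetric]] inP[OF inB(5) inB(4) cd(1)[symmetric]] _ fb'(2) fc'(2)])
       (use bc in auto)
  next
    case uv: True
    show False
    proof (cases "d g2 g3 = d g3 g1")
      case False
      show False
        by (rule three_twos[OF Pf Pc fS False[symmetric] sw(2) ne(2)[symmetric]
            inP[OF inB(3) inB(1) bd(3)[symmetric]] inP[OF inB(6) inB(4) cd(3)[symmetric]] _ fb'(5) fc'(5)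
            inP[OF inB(2) inB(3) bd(2)] inP[OF inB(5) inB(6) cd(2)] _ fb'(3) fc'(3)
            inP[OF inB(3) inB(2) bd(2)[symmetric]] inP[OF inB(6) inB(5) cd(2)[symmetric]] _ fb'(4) fc'(4)])
         (use bc in auto)
    next
      case vw: True
      show False
        by (rule three_and_two[OF Pf Pc fS sw(1)
            inP[OF inB(1) inB(2) bd(1)] inP[OF inB(2) inB(3) bd(2)] inP[OF inB(3) inB(1) bd(3)[symmetric]]
            _ _ _ fb'(1) _ _
            inP[OF inB(2) inB(1) bd(1)[symmetric]] inP[OF inB(5) inB(4) cd(1)[symmetric]] _ fb'(2) fc'(2)])
          (use bc bd uv vw fb' in auto)
    qed
  qed
qed


theorem mainTheorem18:
  fixes G :: "('g, 'b) monoid_scheme" and \<alpha> \<beta> :: "'g \<Rightarrow> 'f::field"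
    and s s' :: 'g and i j :: nat
  assumes "group G" and "torsion_free G"
    and "zero_divisor G \<alpha>"
    and "card (supp \<alpha>) = 4" and "card (S_set G \<alpha>) = 10"
    and "mate G \<alpha> \<beta>"
    and "s \<in> Delta G (supp \<alpha>) (supp \<beta>) i" and "s' \<in> Delta G (supp \<alpha>) (supp \<beta>) j"
    and "s \<noteq> s'" and "i \<in> {3, 4}" and "j \<in> {3, 4}"
  shows "card (Vset G (supp \<alpha>) (supp \<beta>) s \<inter> Vset G (supp \<alpha>) (supp \<beta>) s') \<le> 2"
  by (rule group.main_aux[OF assms(1) assms])

end
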